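(* For every odd $m\ge3$, the suffix array of $\bar{\mathsf{F}}_m$ is an arithmetically progressed permutation with ratio $f_{m-2}$ (and first entry $f_m$).
   Context: Fibonacci words: $\mathsf{F}_1=\mathtt{b}$, $\mathsf{F}_2=\mathtt{a}$, $\mathsf{F}_m=\mathsf{F}_{m-1}\mathsf{F}_{m-2}$ for $m\ge3$; $f_m=|\mathsf{F}_m|$. $\bar{\mathsf{F}}_m$ is $\mathsf{F}_m$ with every $\mathtt{a}$ replaced by $\mathtt{b}$ and every $\mathtt{b}$ by $\mathtt{a}$. Order $\mathtt{a}<\mathtt{b}$; lexicographic order with a proper prefix smaller than the longer string; suffix array $\mathsf{SA}_{\mathsf{T}}$: permutation of $[1..n]$ such that $\mathsf{T}[\mathsf{SA}_{\mathsf{T}}[i]..n]$ is the $i$-th smallest suffix. $x\bmod n$: representative in $[1..n]$. An arithmetically progressed permutation of length $n$ with ratio $k\in[1..n-1]$ is a permutation $P$ of $[1..n]$ with $P[i+1]=P[i]+k\bmod n$. *)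

theory Defs
  imports Main
begin

datatype letter = letA | letB

definition letter_less :: "(letter \<times> letter) set" where
  "letter_less = {(letA, letB)}"

text \<open>Lexicographic order on words; a proper prefix is smaller (List.lexord).\<close>
definition word_less :: "letter list \<Rightarrow> letter list \<Rightarrow> bool" where
  "word_less u v \<longleftrightarrow> (u, v) \<in> lexord letter_less"

fun fibword :: "nat \<Rightarrow> letter list" where
  "fibword 0 = []"
| "fibword (Suc 0) = [letB]"
| "fibword (Suc (Suc 0)) = [letA]"
| "fibword (Suc (Suc (Suc n))) = fibword (Suc (Suc n)) @ fibword (Suc n)"

definition fiblen :: "nat \<Rightarrow> nat" where
  "fiblen m = length (fibword m)"

fun swap_letter :: "letter \<Rightarrow> letter" where
  "swap_letter letA = letB"
| "swap_letter letB = letA"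

definition fibword_bar :: "nat \<Rightarrow> letter list" where
  "fibword_bar m = map swap_letter (fibword m)"

text \<open>Suffix T[i..n] for 1-based i.\<close>
definition suffix_at :: "letter list \<Rightarrow> nat \<Rightarrow> letter list" where
  "suffix_at T i = drop (i - 1) T"

text \<open>A permutation of [1..n], written as the list [P[1],...,P[n]].\<close>
definition is_perm_1n :: "nat \<Rightarrow> nat list \<Rightarrow> bool" where
  "is_perm_1n n P \<longleftrightarrow> length P = n \<and> distinct P \<and> set P = {1..n}"

definition is_suffix_array :: "letter list \<Rightarrow> nat list \<Rightarrow> bool" where
  "is_suffix_array T P \<longleftrightarrow> is_perm_1n (length T) P \<and>
     (\<forall>i j. i < j \<and> j < length P \<longrightarrow> word_less (suffix_at T (P ! i)) (suffix_at T (P ! j)))"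

definition mod1 :: "nat \<Rightarrow> nat \<Rightarrow> nat" where
  "mod1 x n = (x - 1) mod n + 1"

definition arith_prog_perm :: "nat \<Rightarrow> nat \<Rightarrow> nat list \<Rightarrow> bool" where
  "arith_prog_perm n k P \<longleftrightarrow> is_perm_1n n P \<and> 1 \<le> k \<and> k \<le> n - 1 \<and>
     (\<forall>i. i + 1 < n \<longrightarrow> P ! (i + 1) = mod1 (P ! i + k) n)"

end

theory Submission imports Defs "HOL-Number_Theory.Fib" begin
lemma fiblen_fib: "fiblen m = fib m"
  unfolding fiblen_def
  by (induction m rule: fibword.induct) (auto simp: numeral_eq_Suc)

lemma cass: "int (fib (Suc j))^2 - int (fib j) * (int (fib j) + int (fib (Suc j))) = (-1)^j"
proof -
  have "int (fib (Suc (Suc j)) * fib j) - int((fib (Suc j))\<^sup>2) = - ((-1)^j)" by (rule fib_Cassini_int)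
  moreover have "fib (Suc (Suc j)) = fib j + fib (Suc j)" by simp
  ultimately show ?thesis by (simp add: algebra_simps)
qed

lemma fibS2: "int (fib (Suc (Suc j))) = int (fib j) + int (fib (Suc j))" by simp

lemma I1: "int (fib (j+1)) * int (fib (j+2)) - int (fib j) * int (fib (j+3)) = (-1)^j"
  using cass[of j] fibS2[of j] fibS2[of "Suc j"] by (simp add: numeral_eq_Suc algebra_simps power2_eq_square)

lemma I2: "int (fib (j+2))^2 - int (fib j) * int (fib (j+4)) = (-1)^j"
  using cass[of j] fibS2[of j] fibS2[of "Suc j"] fibS2[of "Suc (Suc j)"] by (simp add: numeral_eq_Suc algebra_simps power2_eq_square)

lemma I3: "odd j \<Longrightarrow> int (fib (j+2)) dvd int (fib j)^2 + 1"
proof -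
  assume "odd j"
  then have c: "int (fib (Suc j))^2 - int (fib j) * (int (fib j) + int (fib (Suc j))) = -1" using cass[of j] by simp
  have "int (fib j)^2 + 1 = int (fib (j+2)) * (int (fib j) - int (fib (Suc j)) + int (fib j))"
    using c fibS2[of j] by (simp add: numeral_eq_Suc algebra_simps power2_eq_square)
  then show ?thesis by (metis dvd_triv_left)
qed


lemma G:
  fixes n n' k k' e e' x :: int
  assumes n: "0 < n" and nn: "n \<le> n'" and det: "k'*n - k*n' = e - e'"
    and ee: "(e=0 \<and> e'=1) \<or> (e=1 \<and> e'=0)" and x1: "1 \<le> x" and x2: "x \<le> n'"
  shows "(x*k + e - 1) div n = (x*k' + e' - 1) div n'"
proof -
  define A where "A = x*k + e - 1"
  define B where "B = x*k' + e' - 1"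
  define q where "q = A div n"
  define r where "r = A mod n"
  have Aqr: "A = q*n + r" unfolding q_def r_def by simp
  have r0: "0 \<le> r" and r1: "r \<le> n - 1" unfolding r_def using n by auto
  define s where "s = B - q*n'"
  have sn: "s*n = r*n' - (A*n' - B*n)" unfolding s_def using Aqr by (simp add: algebra_simps)
  have rn: "r*n' \<le> (n-1)*n'" using r1 nn n by (intro mult_right_mono) auto
  have rn2: "(n-1)*n' = n*n' - n'" by (simp add: algebra_simps)
  have rn0: "0 \<le> r*n'" using r0 nn n by simp
  have Dg: "A*n' - B*n = x*(k*n' - k'*n) + (e-1)*n' - (e'-1)*n"
    unfolding A_def B_def by (simp add: algebra_simps)
  have det2: "k*n' - k'*n = e' - e" using det by simp
  have bounds: "0 \<le> s*n \<and> s*n < n*n'"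
  proof (cases "e = 0")
    case True
    then have e': "e' = 1" using ee by auto
    have D: "A*n' - B*n = x - n'" using Dg det2 True e' by simp
    show ?thesis using sn D rn rn2 rn0 x1 x2 by linarith
  next
    case False
    then have e: "e = 1" and e': "e' = 0" using ee by auto
    have D: "A*n' - B*n = n - x" using Dg det2 e e' by simp
    have low: "0 \<le> r*n' - n + x"
    proof (cases "r = 0")
      case True
      then have "n dvd A" unfolding r_def by auto
      then have "n dvd x*k" unfolding A_def using e by simp
      then have d1: "n dvd x*k*n'" by simp
      have d2: "n dvd x*k'*n" by simp
      have "x*k'*n - x*k*n' = x*(k'*n - k*n')" by (simp add: algebra_simps)
      then have "x*k'*n - x*k*n' = x" using det e e' by simp
      then have "n dvd x" using dvd_diff[OF d2 d1] by simp
      then have "n \<le> x" using x1 by (simp add: zdvd_imp_le)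
      then show ?thesis using True by simp
    next
      case False
      then have r1': "1 \<le> r" using r0 by simp
      have "1*n' \<le> r*n'" using nn n r1' by (intro mult_right_mono) auto
      then show ?thesis using nn x1 by simp
    qed
    show ?thesis using sn D rn rn2 low x1 x2 n nn by linarith
  qed
  have s0: "0 \<le> s" using bounds n by (simp add: zero_le_mult_iff)
  have s1: "s < n'" using bounds n by (metis mult.commute mult_less_cancel_left_pos)
  have "B = s + q*n'" unfolding s_def by simp
  then have "B div n' = q" using s0 s1 by simp
  then show ?thesis unfolding A_def B_def q_def by simp
qed

definition ee :: "nat \<Rightarrow> int" where "ee m = (if even m then 1 else 0)"
definition gg :: "nat \<Rightarrow> nat \<Rightarrow> int" where
  "gg m x = (int x * int (fib (m-2)) + ee m - 1) div int (fib m)"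

lemma ee_diff: "ee (j+2) - ee (j+3) = (-1)^j"
  unfolding ee_def by auto

lemma fib3: "fib (j+3) = fib (j+2) + fib (j+1)"
  by (simp add: numeral_eq_Suc)

declare fib2[simp del]

lemma fibpos: "0 < n \<Longrightarrow> 0 < int (fib n)" by (simp add: fib_neq_0_nat)

lemma L1:
  assumes "M \<ge> 3" "1 \<le> x" "x \<le> fib M + 1"
  shows "gg (Suc M) x = gg M x"
proof -
  define j where "j = M - 2"
  have M: "M = j+2" using assms(1) unfolding j_def by simp
  have p: "fib (j+1) > 0" by (simp add: fib_neq_0_nat)
  have q1: "fib (M-2) = fib j" "fib (Suc M - 2) = fib (j+1)" "fib (Suc M) = fib (j+3)" "fib M = fib (j+2)"
    "ee M = ee (j+2)" "ee (Suc M) = ee (j+3)" by (simp_all add: M numeral_eq_Suc)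
  have "(int x * int (fib (Suc M - 2)) + ee (Suc M) - 1) div int (fib (Suc M)) =
        (int x * int (fib (M-2)) + ee M - 1) div int (fib M)"
    unfolding q1
  proof (rule G[symmetric])
    show "0 < int (fib (j+2))" by (rule fibpos) simp
    show "int (fib (j + 2)) \<le> int (fib (j + 3))" using fib3[of j] by simp
    show "int (fib (j + 1)) * int (fib (j + 2)) - int (fib j) * int (fib (j + 3)) = ee (j + 2) - ee (j + 3)"
      using I1[of j] ee_diff[of j] by simp
    show "ee (j + 2) = 0 \<and> ee (j + 3) = 1 \<or> ee (j + 2) = 1 \<and> ee (j + 3) = 0" unfolding ee_def by auto
    show "1 \<le> int x" using assms by simp
    show "int x \<le> int (fib (j + 3))" using assms fib3[of j] p q1(4) by simp
  qed
  then show ?thesis unfolding gg_def .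
qed
lemma L2:
  assumes "M \<ge> 4" "1 \<le> x" "x \<le> fib (M-1) + 1"
  shows "gg (Suc M) (fib M + x) = gg (M-1) x + int (fib (M-2))"
proof -
  define j where "j = M - 3"
  have M: "M = j+3" using assms(1) unfolding j_def by simp
  have q1: "fib (M-1-2) = fib j" "fib (M-1) = fib (j+2)" "fib (Suc M - 2) = fib (j+2)" "fib (Suc M) = fib (j+4)" "fib M = fib (j+3)"
    "fib (M-2) = fib (j+1)" "ee (M-1) = ee (j+2)" "ee (Suc M) = ee (j+4)" by (simp_all add: M numeral_eq_Suc)
  have p: "fib (j+3) > 0" by (simp add: fib_neq_0_nat)
  have f4: "fib (j+4) = fib (j+3) + fib (j+2)" using fib3[of "Suc j"] by (simp add: numeral_eq_Suc)
  have Gi: "(int x * int (fib j) + ee (j+2) - 1) div int (fib (j+2)) =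
        (int x * int (fib (j+2)) + ee (j+3) - 1) div int (fib (j+4))"
  proof (rule G)
    show "0 < int (fib (j+2))" by (rule fibpos) simp
    show "int (fib (j + 2)) \<le> int (fib (j + 4))" using f4 by simp
    show "int (fib (j + 2)) * int (fib (j + 2)) - int (fib j) * int (fib (j + 4)) = ee (j + 2) - ee (j + 3)"
      using I2[of j] ee_diff[of j] by (simp add: power2_eq_square)
    show "ee (j + 2) = 0 \<and> ee (j + 3) = 1 \<or> ee (j + 2) = 1 \<and> ee (j + 3) = 0" unfolding ee_def by auto
    show "1 \<le> int x" using assms by simp
    show "int x \<le> int (fib (j + 4))" using assms f4 p q1(2) by simp
  qed
  have i1: "int (fib (j+2)) * int (fib (j+3)) - int (fib (j+1)) * int (fib (j+4)) = (-1)^(j+1)"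
    using I1[of "j+1"] by (simp add: numeral_eq_Suc)
  have i2: "ee (j+3) - ee (j+4) = (-1)^(j+1)"
    using ee_diff[of "j+1"] by (simp add: numeral_eq_Suc)
  have N: "int (fib (j+3) + x) * int (fib (j+2)) + ee (j+4) - 1
        = (int x * int (fib (j+2)) + ee (j+3) - 1) + int (fib (j+1)) * int (fib (j+4))"
    using i1 i2 by (simp add: algebra_simps)
  have nz: "int (fib (j+4)) \<noteq> 0" using fibpos[of "j+4"] by simp
  have "gg (Suc M) (fib M + x) = (int (fib (j+3) + x) * int (fib (j+2)) + ee (j+4) - 1) div int (fib (j+4))"
    unfolding gg_def q1 ..
  also have "\<dots> = int (fib (j+1)) + (int x * int (fib (j+2)) + ee (j+3) - 1) div int (fib (j+4))"
    unfolding N using div_mult_self1[OF nz] by simp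
  also have "\<dots> = gg (M-1) x + int (fib (M-2))"
    unfolding gg_def q1 Gi by simp
  finally show ?thesis .
qed
lemma fibword_Suc: "M \<ge> 2 \<Longrightarrow> fibword (Suc M) = fibword M @ fibword (M-1)"
  by (cases M rule: fibword.cases) auto

lemma formula:
  "m \<ge> 3 \<Longrightarrow> i < fib m \<Longrightarrow> fibword m ! i = (if gg m (i+1) < gg m (i+2) then letB else letA)"
proof (induction m arbitrary: i rule: less_induct)
  case (less m)
  show ?case
  proof (cases "m \<le> 4")
    case True
    then have "m = 3 \<or> m = 4" using less.prems by auto
    then show ?thesis
    proof
      assume m: "m = 3"
      have "fib 3 = 2" by (simp add: numeral_eq_Suc fib2)
      then have "i = 0 \<or> i = 1" using less.prems m by auto
      have "fibword 3 = [letA, letB]" by (simp add: numeral_eq_Suc)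
      moreover have "ee 3 = 0" by (simp add: ee_def)
      moreover have "fib (3-2) = 1" by simp
      ultimately show ?thesis using m \<open>fib 3 = 2\<close> \<open>i = 0 \<or> i = 1\<close> by (auto simp: gg_def)
    next
      assume m: "m = 4"
      have "fib 4 = 3" by (simp add: numeral_eq_Suc fib2)
      then have "i = 0 \<or> i = 1 \<or> i = 2" using less.prems m by auto
      have "fibword 4 = [letA, letB, letA]" by (simp add: numeral_eq_Suc)
      moreover have "ee 4 = 1" by (simp add: ee_def)
      moreover have "fib (4-2) = 1" by simp
      ultimately show ?thesis using m \<open>fib 4 = 3\<close> \<open>i = 0 \<or> i = 1 \<or> i = 2\<close> by (auto simp: gg_def)
    qed
  next
    case False
    define M where "M = m - 1"
    have m: "m = Suc M" and M4: "M \<ge> 4" using False unfolding M_def by auto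
    have fw: "fibword m = fibword M @ fibword (M-1)" using fibword_Suc[of M] M4 m by simp
    have lenM: "length (fibword M) = fib M" using fiblen_fib[of M] by (simp add: fiblen_def)
    have fS: "fib (Suc M) = fib M + fib (M-1)"
    proof -
      have e: "Suc (M - 1) = M" using M4 by simp
      show ?thesis using fib2[of "M-1"] unfolding e by simp
    qed
    show ?thesis
    proof (cases "i < fib M")
      case True
      have "fibword m ! i = fibword M ! i" using fw lenM True by (simp add: nth_append)
      also have "\<dots> = (if gg M (i+1) < gg M (i+2) then letB else letA)"
        using less.IH[of M i] m M4 True by simp
      also have "\<dots> = (if gg m (i+1) < gg m (i+2) then letB else letA)"
        using L1[of M "i+1"] L1[of M "i+2"] M4 True m by simp
      finally show ?thesis .
    next
      case False
      define j where "j = i - fib M"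
      have ij: "i = fib M + j" using False unfolding j_def by simp
      have jl: "j < fib (M-1)" using less.prems ij m fS by simp
      have "fibword m ! i = fibword (M-1) ! j" using fw lenM ij by (simp add: nth_append)
      also have "\<dots> = (if gg (M-1) (j+1) < gg (M-1) (j+2) then letB else letA)"
        using less.IH[of "M-1" j] m M4 jl by simp
      also have "\<dots> = (if gg m (i+1) < gg m (i+2) then letB else letA)"
        using L2[of M "j+1"] L2[of M "j+2"] M4 jl m ij by (simp add: add.assoc)
      finally show ?thesis .
    qed
  qed
qed
lemma div_step:
  fixes y k n :: int
  assumes "0 < n" "0 \<le> k" "k < n"
  shows "(y div n < (y + k) div n) \<longleftrightarrow> n \<le> y mod n + k"
proof -
  have a: "(y + k) div n = y div n + (y mod n + k) div n"
    using div_add1_eq[of y k n] assms by simp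
  have r: "0 \<le> y mod n" "y mod n < n" using assms by auto
  show ?thesis
  proof (cases "n \<le> y mod n + k")
    case True
    have "(y mod n + k) div n = (y mod n + k - n) div n + 1"
      using div_add_self2[of n "y mod n + k - n"] assms by simp
    also have "(y mod n + k - n) div n = 0" using True r assms by (intro div_pos_pos_trivial) linarith+
    finally show ?thesis using a True by simp
  next
    case False
    have "(y mod n + k) div n = 0" using False r assms by (intro div_pos_pos_trivial) auto
    then show ?thesis using a False by simp
  qed
qed

lemma bar_formula:
  assumes "odd m" "m \<ge> 3" "1 \<le> p" "p \<le> fib m"
  shows "fibword_bar m ! (p-1) = (if fib m - fib (m-2) \<le> (p * fib (m-2) - 1) mod fib m then letA else letB)"
proof -
  define n where "n = fib m"
  define k where "k = fib (m-2)"
  have n0: "0 < n" unfolding n_def using assms by (simp add: fib_neq_0_nat)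
  have k1: "1 \<le> k" unfolding k_def using assms by (simp add: Suc_le_eq fib_neq_0_nat)
  have kn: "k < n"
  proof -
    have e: "m = Suc (Suc (m-2))" using assms by simp
    have "fib m = fib (Suc (m-2)) + fib (m-2)" using fib2[of "m-2"] e by simp
    moreover have "0 < fib (Suc (m-2))" by (simp add: fib_neq_0_nat)
    ultimately show ?thesis unfolding n_def k_def by simp
  qed
  have len: "length (fibword m) = n" using fiblen_fib[of m] by (simp add: fiblen_def n_def)
  have F: "fibword m ! (p-1) = (if gg m p < gg m (p+1) then letB else letA)"
    using formula[of m "p-1"] assms by (simp add: n_def)
  have ee0: "ee m = 0" using assms by (simp add: ee_def)
  define y where "y = int p * int k - 1"
  have g1: "gg m p = y div int n" unfolding gg_def y_def n_def k_def ee0 by simp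
  have g2: "gg m (p+1) = (y + int k) div int n" unfolding gg_def y_def n_def k_def ee0 by (simp add: algebra_simps)
  have pk: "1 \<le> p * k" using assms k1 by (simp add: Suc_le_eq)
  have ym: "y mod int n = int ((p*k - 1) mod n)" unfolding y_def using pk by (simp add: of_nat_mod of_nat_diff)
  have "(gg m p < gg m (p+1)) \<longleftrightarrow> int n \<le> y mod int n + int k"
    unfolding g1 g2 using div_step[of "int n" "int k" y] n0 kn by simp
  also have "\<dots> \<longleftrightarrow> n - k \<le> (p*k - 1) mod n" unfolding ym using kn by linarith
  finally have c: "(gg m p < gg m (p+1)) \<longleftrightarrow> n - k \<le> (p*k - 1) mod n" .
  have "fibword_bar m ! (p-1) = swap_letter (fibword m ! (p-1))"
    unfolding fibword_bar_def using assms len n_def by simp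
  then show ?thesis using F c unfolding n_def k_def by (auto split: if_splits)
qed
lemma lex_main:
  fixes w :: "letter list" and n k :: nat
  assumes k1: "1 \<le> k" and kn: "k < n" and len: "length w = n"
    and W: "\<And>p. 1 \<le> p \<Longrightarrow> p \<le> n \<Longrightarrow> w ! (p-1) = (if n - k \<le> (p*k - 1) mod n then letA else letB)"
  shows "1 \<le> p \<Longrightarrow> p \<le> n \<Longrightarrow> 1 \<le> q \<Longrightarrow> q \<le> n \<Longrightarrow> (q*k-1) mod n < (p*k-1) mod n
    \<Longrightarrow> (drop (p-1) w, drop (q-1) w) \<in> lexord letter_less"
proof (induction "n - p" arbitrary: p q rule: less_induct)
  case less
  define r where "r x = (x*k - 1) mod n" for x
  have n0: "0 < n" using kn by simp
  have rlt: "r x < n" for x unfolding r_def using n0 by simp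
  have rn: "r n = n - 1"
  proof -
    have e: "n*k - 1 = (n-1) + (k-1)*n" using k1 n0 by (cases k) (auto simp: algebra_simps)
    show ?thesis unfolding r_def e mod_mult_self1 using n0 by simp
  qed
  have rstep: "r (x+1) = (r x + k) mod n" if "1 \<le> x" for x
  proof -
    have "(x+1)*k - 1 = (x*k - 1) + k" using that k1 by (simp add: algebra_simps)
    then show ?thesis unfolding r_def by (simp add: mod_add_left_eq)
  qed
  have rq: "r q < r p" using less.prems unfolding r_def by simp
  have qn: "q \<noteq> n" using rq rn rlt[of p] by auto
  have dp: "drop (p-1) w = w!(p-1) # drop p w" using less.prems len
    by (metis Cons_nth_drop_Suc Suc_diff_1 diff_less le_eq_less_or_eq less_le_trans zero_less_one)
  have dq: "drop (q-1) w = w!(q-1) # drop q w" using less.prems len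
    by (metis Cons_nth_drop_Suc Suc_diff_1 diff_less le_eq_less_or_eq less_le_trans zero_less_one)
  have Wp: "w!(p-1) = (if n - k \<le> r p then letA else letB)" using W less.prems unfolding r_def by simp
  have Wq: "w!(q-1) = (if n - k \<le> r q then letA else letB)" using W less.prems unfolding r_def by simp
  show ?case
  proof (cases "w!(p-1) = w!(q-1)")
    case False
    then have "n - k \<le> r p" "\<not> n - k \<le> r q" using Wp Wq rq by (auto split: if_splits)
    then have "(w!(p-1), w!(q-1)) \<in> letter_less" using Wp Wq by (simp add: letter_less_def)
    then show ?thesis unfolding dp dq by simp
  next
    case True
    have qlt: "q < n" using qn less.prems by simp
    show ?thesis
    proof (cases "p = n")
      case True
      have "drop q w \<noteq> []" using qlt len by simp
      then have "([], drop q w) \<in> lexord letter_less" by (metis lexord_Nil_left neq_Nil_conv)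
      then show ?thesis unfolding dp dq using True \<open>w!(p-1) = w!(q-1)\<close> len by simp
    next
      case False
      then have plt: "p < n" using less.prems by simp
      have same: "(n - k \<le> r p) = (n - k \<le> r q)" using True Wp Wq by (auto split: if_splits)
      have rq1: "r (q+1) < r (p+1)"
      proof (cases "n - k \<le> r p")
        case True
        then have "n - k \<le> r q" using same by simp
        have wrap: "(a + k) mod n = a + k - n" if "n - k \<le> a" "a < n" for a
        proof -
          have "(a + k) mod n = (a + k - n) mod n" using that kn by (intro le_mod_geq) linarith
          also have "\<dots> = a + k - n" using that kn by (intro mod_less) linarith
          finally show ?thesis .
        qed
        have "r (q+1) = r q + k - n" "r (p+1) = r p + k - n"
          using True \<open>n - k \<le> r q\<close> rstep[of q] rstep[of p] less.prems wrap[of "r p"] wrap[of "r q"] rlt[of p] rlt[of q]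
          by simp_all
        then show ?thesis using rq \<open>n - k \<le> r q\<close> kn by simp
      next
        case False
        then have "\<not> n - k \<le> r q" using same by simp
        then have "r (q+1) = r q + k" "r (p+1) = r p + k"
          using False rstep[of q] rstep[of p] less.prems kn by simp_all
        then show ?thesis using rq by simp
      qed
      have IH: "(drop p w, drop q w) \<in> lexord letter_less"
        using less.hyps[of "p+1" "q+1"] rq1 plt qlt less.prems unfolding r_def by simp
      then show ?thesis unfolding dp dq using True by simp
    qed
  qed
qed
lemma asym_ll: "asym letter_less"
  unfolding letter_less_def by (auto intro: asymI)

lemma kn_facts:
  assumes "m \<ge> 3"
  shows "1 \<le> fib (m-2)" "fib (m-2) < fib m"
proof -
  show "1 \<le> fib (m-2)" using assms by (simp add: Suc_le_eq fib_neq_0_nat)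
  have e: "m = Suc (Suc (m-2))" using assms by simp
  have "fib m = fib (Suc (m-2)) + fib (m-2)" using fib2[of "m-2"] e by simp
  moreover have "0 < fib (Suc (m-2))" by (simp add: fib_neq_0_nat)
  ultimately show "fib (m-2) < fib m" by simp
qed

lemma rP0:
  fixes n k i :: nat
  assumes k1: "1 \<le> k" and kn: "k < n" and dv: "n dvd k*k + 1" and i: "i < n"
  shows "(mod1 (n + i*k) n * k - 1) mod n = n - 1 - i"
proof -
  define x where "x = mod1 (n + i*k) n"
  have n0: "0 < n" using kn by simp
  have x1: "1 \<le> x" unfolding x_def mod1_def by simp
  have xk: "1 \<le> x*k" using x1 k1 by (simp add: Suc_le_eq)
  define t where "t = (int n + int i * int k - 1) div int n"
  have ia: "int (n + i*k - 1) = int n + int i * int k - 1" using n0 by (simp add: of_nat_diff)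
  have "int x = int ((n + i*k - 1) mod n) + 1" by (simp add: x_def mod1_def)
  also have "int ((n + i*k - 1) mod n) = (int n + int i * int k - 1) mod int n"
    by (simp only: of_nat_mod ia)
  also have "\<dots> = int n + int i * int k - 1 - t * int n"
    unfolding t_def by (simp add: minus_div_mult_eq_mod[symmetric])
  finally have ix: "int x = int n + int i * int k - 1 - t * int n + 1" .
  obtain c where c: "int k * int k + 1 = int n * c" using dv
    by (metis (mono_tags, opaque_lifting) dvd_def of_nat_1 of_nat_add of_nat_mult)
  have ix2: "int x = int n + int i * int k - t * int n" using ix by simp
  have "int x * int k = int n * int k + int i * (int k * int k) - t * int n * int k"
    unfolding ix2 by (simp add: algebra_simps)
  also have "\<dots> = int n * int k + int i * (int n * c - 1) - t * int n * int k" using c by simp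
  finally have xk2: "int x * int k = int n * int k + int i * (int n * c - 1) - t * int n * int k" .
  have ni: "int (n - 1 - i) = int n - 1 - int i" using i by (simp add: of_nat_diff)
  have "int x * int k - 1 - int (n - 1 - i) = int n * (int i * c + int k * (1 - t) - 1)"
    unfolding xk2 ni by (simp add: algebra_simps)
  then have "int n dvd (int x * int k - 1) - int (n - 1 - i)" by simp
  then have "(int x * int k - 1) mod int n = int (n - 1 - i) mod int n"
    using mod_eq_dvd_iff by blast
  also have "\<dots> = int (n - 1 - i)" using i by (intro mod_pos_pos_trivial) auto
  finally have "int ((x*k - 1) mod n) = int (n - 1 - i)" using xk by (simp add: of_nat_mod of_nat_diff)
  then show ?thesis unfolding x_def by simp
qed

theorem mainTheorem17:
  fixes m :: nat
  assumes "odd m" and "m \<ge> 3"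
  shows "(\<exists>P. is_suffix_array (fibword_bar m) P) \<and>
         (\<forall>P. is_suffix_array (fibword_bar m) P \<longrightarrow>
              arith_prog_perm (fiblen m) (fiblen (m - 2)) P \<and> P ! 0 = fiblen m)"
proof -
  define n where "n = fib m"
  define k where "k = fib (m-2)"
  define w where "w = fibword_bar m"
  have k1: "1 \<le> k" and kn: "k < n" using kn_facts[OF assms(2)] unfolding k_def n_def by auto
  have n0: "0 < n" using kn by simp
  have len: "length w = n" unfolding w_def fibword_bar_def n_def using fiblen_fib[of m] by (simp add: fiblen_def)
  have W: "\<And>p. 1 \<le> p \<Longrightarrow> p \<le> n \<Longrightarrow> w ! (p-1) = (if n - k \<le> (p*k - 1) mod n then letA else letB)"
    using bar_formula assms unfolding w_def n_def k_def by blast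
  note LEX = lex_main[OF k1 kn len W]
  have dv: "n dvd k*k + 1"
  proof -
    have o: "odd (m-2)" using assms by presburger
    have "int (fib (m-2+2)) dvd int (fib (m-2))^2 + 1" using I3[OF o] .
    moreover have "m - 2 + 2 = m" using assms by simp
    ultimately have "int n dvd int (k*k + 1)" unfolding n_def k_def by (simp add: power2_eq_square add.commute)
    then show ?thesis by (simp only: of_nat_dvd_iff)
  qed
  define r where "r x = (x*k - 1) mod n" for x
  define P0 where "P0 = map (\<lambda>i. mod1 (n + i*k) n) [0..<n]"
  have lenP0: "length P0 = n" unfolding P0_def by simp
  have rP: "\<And>i. i < n \<Longrightarrow> r (P0!i) = n - 1 - i"
    unfolding r_def P0_def using rP0[OF k1 kn dv] by simp
  have P0rng: "\<And>i. i < n \<Longrightarrow> 1 \<le> P0!i \<and> P0!i \<le> n"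
    unfolding P0_def mod1_def using n0 by (simp add: Suc_le_eq)
  have mr: "map r P0 = map (\<lambda>i. n - 1 - i) [0..<n]"
    by (rule nth_equalityI) (simp_all add: lenP0 rP)
  have dmr: "distinct (map r P0)" unfolding mr
    by (auto simp: distinct_map inj_on_def)
  then have dP0: "distinct P0" and injr: "inj_on r (set P0)" by (simp_all add: distinct_map)
  have setP0: "set P0 = {1..n}"
  proof (rule card_subset_eq)
    show "finite {1..n}" by simp
    show "set P0 \<subseteq> {1..n}" using P0rng lenP0 by (auto simp: in_set_conv_nth)
    show "card (set P0) = card {1..n}" using dP0 lenP0 by (simp add: distinct_card)
  qed
  have permP0: "is_perm_1n n P0" unfolding is_perm_1n_def using lenP0 dP0 setP0 by simp
  have saP0: "is_suffix_array w P0"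
    unfolding is_suffix_array_def
  proof (intro conjI allI impI)
    show "is_perm_1n (length w) P0" using permP0 len by simp
    fix i j assume ij: "i < j \<and> j < length P0"
    then have "r (P0!j) < r (P0!i)" using rP lenP0 by simp linarith
    then show "word_less (suffix_at w (P0 ! i)) (suffix_at w (P0 ! j))"
      unfolding word_less_def suffix_at_def
      using LEX P0rng ij lenP0 unfolding r_def by (metis less_trans)
  qed
  have uniq: "P = P0" if sa: "is_suffix_array w P" for P
  proof -
    have pp: "is_perm_1n n P" using sa len unfolding is_suffix_array_def by simp
    have lenP: "length P = n" and dP: "distinct P" and setP: "set P = {1..n}"
      using pp unfolding is_perm_1n_def by auto
    have Prng: "\<And>i. i < n \<Longrightarrow> 1 \<le> P!i \<and> P!i \<le> n" using setP lenP
      by (metis atLeastAtMost_iff nth_mem)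
    have injr2: "inj_on r {1..n}" using injr setP0 by simp
    have dec: "r (P!j) < r (P!i)" if ij: "i < j" "j < n" for i j
    proof (rule ccontr)
      assume "\<not> r (P!j) < r (P!i)"
      then consider "r (P!i) = r (P!j)" | "r (P!i) < r (P!j)" by linarith
      then show False
      proof cases
        case 1
        then have "P!i = P!j" using injr2 Prng ij by (meson inj_onD atLeastAtMost_iff less_trans)
        then show False using dP lenP ij by (simp add: nth_eq_iff_index_eq)
      next
        case 2
        have a: "(drop (P!j - 1) w, drop (P!i - 1) w) \<in> lexord letter_less"
          using LEX Prng ij 2 unfolding r_def by (meson less_trans)
        have b: "(drop (P!i - 1) w, drop (P!j - 1) w) \<in> lexord letter_less"
          using sa ij lenP unfolding is_suffix_array_def word_less_def suffix_at_def by simp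
        show False using lexord_asymmetric[OF asym_ll b] a by simp
      qed
    qed
    have s1': "sorted_wrt (\<lambda>x y. y \<le> x) (map r P)"
      unfolding sorted_wrt_iff_nth_less using dec lenP by (auto intro: less_imp_le)
    have s1: "sorted (rev (map r P))" using s1' by (simp add: sorted_wrt_rev)
    have s2': "sorted_wrt (\<lambda>x y. y \<le> x) (map r P0)"
      unfolding sorted_wrt_iff_nth_less using rP lenP0 by (simp add: diff_le_mono2)
    have s2: "sorted (rev (map r P0))" using s2' by (simp add: sorted_wrt_rev)
    have d1: "distinct (rev (map r P))" using dP injr2 setP by (simp add: distinct_map)
    have d2: "distinct (rev (map r P0))" using dmr by simp
    have "rev (map r P) = rev (map r P0)"
      using sorted_distinct_set_unique[OF s1 d1 s2 d2] setP setP0 by simp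
    then have "map r P = map r P0" by simp
    then show "P = P0" using inj_on_map_eq_map[of r P P0] injr2 setP setP0 by simp
  qed
  have apP0: "arith_prog_perm n k P0"
    unfolding arith_prog_perm_def
  proof (intro conjI allI impI)
    show "is_perm_1n n P0" by (rule permP0)
    show "1 \<le> k" by (rule k1)
    show "k \<le> n - 1" using kn by simp
    fix i assume i: "i + 1 < n"
    have e: "n + (i+1)*k - 1 = (n + i*k - 1) + k" using n0 by simp
    have "P0 ! (i + 1) = (n + (i+1)*k - 1) mod n + 1" unfolding P0_def mod1_def using i by (simp del: upt_Suc)
    also have "\<dots> = ((n + i*k - 1) + k) mod n + 1" by (simp only: e)
    also have "\<dots> = ((n + i*k - 1) mod n + k) mod n + 1" by (simp add: mod_add_left_eq)
    also have "\<dots> = mod1 (P0 ! i + k) n" unfolding P0_def mod1_def using i by simp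
    finally show "P0 ! (i + 1) = mod1 (P0 ! i + k) n" .
  qed
  have P00: "P0!0 = n" unfolding P0_def mod1_def using n0 by simp
  have fl: "fiblen m = n" "fiblen (m-2) = k" unfolding n_def k_def by (simp_all add: fiblen_fib)
  have A: "\<exists>P. is_suffix_array w P" using saP0 by blast
  have B: "\<forall>P. is_suffix_array w P \<longrightarrow> arith_prog_perm n k P \<and> P!0 = n" using uniq apP0 P00 by blast
  show ?thesis unfolding fl w_def[symmetric] using A B by blast
qed
end
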